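(* Let $f:M\to M$ be a partially hyperbolic endomorphism of a closed manifold $M$ and let $x\in M$. (I) If $E^c_1(x)$, $E^c_2(x)$ are two center directions at $x$, then the angle between $Df^n_x(E^c_1(x))$ and $Df^n_x(E^c_2(x))$ tends to $0$ as $n\to+\infty$. (II) If $E^u_1(x)$, $E^u_2(x)$ are two unstable directions at $x$, then the angle between $Df^n_x(E^u_1(x))$ and $Df^n_x(E^u_2(x))$ tends to $0$ as $n\to+\infty$.
   Context: A $C^1$ local diffeomorphism $f:M\to M$ is a partially hyperbolic endomorphism if there are a Riemannian metric and constants $0<\nu<\gamma_1\le\gamma_2<\mu$, $\nu<1<\mu$, $C>1$ such that for every orbit $(x_n)_{n\in\mathbb{Z}}$ ($f(x_n)=x_{n+1}$) there is a splitting $T_{x_n}M=E^s_f(x_n)\oplus E^c_f(x_n)\oplus E^u_f(x_n)$, $Df$-invariant along the orbit, with $\|Df^n_{x_i}v^s\|\le C\nu^n\|v^s\|$, $C^{-1}\gamma_1^n\|v^c\|\le\|Df^n_{x_i}v^c\|\le C\gamma_2^n\|v^c\|$, $C^{-1}\mu^n\|v^u\|\le\|Df^n_{x_i}v^u\|$ for all $n\ge0$, $i\in\mathbb{Z}$, $v^\ast\in E^\ast_f(x_i)$. For $\sigma\in\{c,u\}$, a $\sigma$-direction at $x$ is $E^\sigma_f(x_0)$ for some orbit with $x_0=x$. *)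

theory Defs
  imports "HOL-Analysis.Analysis"
begin

text \<open>Closed manifolds are modelled as compact embedded C1 submanifolds (without
boundary) of a Euclidean space (Whitney embedding).\<close>

definition C1_on :: "'a::euclidean_space set \<Rightarrow> ('a \<Rightarrow> 'b::euclidean_space) \<Rightarrow> bool" where
  "C1_on U \<phi> \<longleftrightarrow> (\<exists>\<phi>'. (\<forall>y\<in>U. (\<phi> has_derivative blinfun_apply (\<phi>' y)) (at y))
                       \<and> continuous_on U \<phi>')"

definition closed_C1_manifold :: "'a::euclidean_space set \<Rightarrow> bool" where
  "closed_C1_manifold M \<longleftrightarrow> compact M \<and>
     (\<forall>x\<in>M. \<exists>U V (\<phi>::'a \<Rightarrow> 'a) \<psi> S. open U \<and> x \<in> U \<and> open V \<and> homeomorphism U V \<phi> \<psi>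
        \<and> C1_on U \<phi> \<and> C1_on V \<psi> \<and> subspace S \<and> \<phi> ` (M \<inter> U) = V \<inter> S)"

definition tangent_space :: "'a::euclidean_space set \<Rightarrow> 'a \<Rightarrow> 'a set" where
  "tangent_space M x = {v. \<exists>\<gamma>::real \<Rightarrow> 'a. (\<forall>t. \<gamma> t \<in> M) \<and> \<gamma> 0 = x
                              \<and> (\<gamma> has_vector_derivative v) (at 0)}"

definition C1_local_diffeo :: "'a::euclidean_space set \<Rightarrow> ('a \<Rightarrow> 'a) \<Rightarrow> ('a \<Rightarrow> 'a \<Rightarrow>\<^sub>L 'a) \<Rightarrow> bool" where
  "C1_local_diffeo M f f' \<longleftrightarrow> f ` M \<subseteq> M \<and>
     (\<exists>U. open U \<and> M \<subseteq> U \<and> (\<forall>y\<in>U. (f has_derivative blinfun_apply (f' y)) (at y))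
          \<and> continuous_on U f') \<and>
     (\<forall>y\<in>M. bij_betw (blinfun_apply (f' y)) (tangent_space M y) (tangent_space M (f y)))"

definition riemannian_metric :: "'a::euclidean_space set \<Rightarrow> ('a \<Rightarrow> 'a \<Rightarrow> 'a \<Rightarrow> real) \<Rightarrow> bool" where
  "riemannian_metric M g \<longleftrightarrow>
     continuous_on (M \<times> (UNIV \<times> UNIV)) (\<lambda>(x, u, v). g x u v) \<and>
     (\<forall>x\<in>M. bilinear (g x) \<and> (\<forall>u v. g x u v = g x v u) \<and>
        (\<forall>v\<in>tangent_space M x. v \<noteq> 0 \<longrightarrow> g x v v > 0))"

definition gnorm :: "('a::euclidean_space \<Rightarrow> 'a \<Rightarrow> 'a \<Rightarrow> real) \<Rightarrow> 'a \<Rightarrow> 'a \<Rightarrow> real" where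
  "gnorm g x v = sqrt (g x v v)"

fun Dfn :: "('a::euclidean_space \<Rightarrow> 'a) \<Rightarrow> ('a \<Rightarrow> 'a \<Rightarrow>\<^sub>L 'a) \<Rightarrow> 'a \<Rightarrow> nat \<Rightarrow> 'a \<Rightarrow> 'a" where
  "Dfn f f' p 0 v = v"
| "Dfn f f' p (Suc n) v = blinfun_apply (f' ((f ^^ n) p)) (Dfn f f' p n v)"

definition is_orbit :: "'a::euclidean_space set \<Rightarrow> ('a \<Rightarrow> 'a) \<Rightarrow> (int \<Rightarrow> 'a) \<Rightarrow> bool" where
  "is_orbit M f x \<longleftrightarrow> (\<forall>n. x n \<in> M \<and> f (x n) = x (n + 1))"

definition ph_splitting ::
  "'a::euclidean_space set \<Rightarrow> ('a \<Rightarrow> 'a) \<Rightarrow> ('a \<Rightarrow> 'a \<Rightarrow>\<^sub>L 'a) \<Rightarrow> ('a \<Rightarrow> 'a \<Rightarrow> 'a \<Rightarrow> real)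
   \<Rightarrow> real \<Rightarrow> real \<Rightarrow> real \<Rightarrow> real \<Rightarrow> real
   \<Rightarrow> (int \<Rightarrow> 'a) \<Rightarrow> (int \<Rightarrow> 'a set) \<Rightarrow> (int \<Rightarrow> 'a set) \<Rightarrow> (int \<Rightarrow> 'a set) \<Rightarrow> bool" where
  "ph_splitting M f f' g \<nu> \<gamma>1 \<gamma>2 \<mu> C x Es Ec Eu \<longleftrightarrow>
    (\<forall>n. subspace (Es n) \<and> subspace (Ec n) \<and> subspace (Eu n) \<and>
       {a + b + c | a b c. a \<in> Es n \<and> b \<in> Ec n \<and> c \<in> Eu n} = tangent_space M (x n) \<and>
       (\<forall>a b c. a \<in> Es n \<longrightarrow> b \<in> Ec n \<longrightarrow> c \<in> Eu n \<longrightarrow> a + b + c = 0 \<longrightarrow>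
                a = 0 \<and> b = 0 \<and> c = 0) \<and>
       blinfun_apply (f' (x n)) ` Es n = Es (n + 1) \<and>
       blinfun_apply (f' (x n)) ` Ec n = Ec (n + 1) \<and>
       blinfun_apply (f' (x n)) ` Eu n = Eu (n + 1)) \<and>
    (\<forall>i. \<forall>k::nat.
       (\<forall>v\<in>Es i. gnorm g (x (i + int k)) (Dfn f f' (x i) k v) \<le> C * \<nu> ^ k * gnorm g (x i) v) \<and>
       (\<forall>v\<in>Ec i. inverse C * \<gamma>1 ^ k * gnorm g (x i) v \<le> gnorm g (x (i + int k)) (Dfn f f' (x i) k v)
                 \<and> gnorm g (x (i + int k)) (Dfn f f' (x i) k v) \<le> C * \<gamma>2 ^ k * gnorm g (x i) v) \<and>
       (\<forall>v\<in>Eu i. inverse C * \<mu> ^ k * gnorm g (x i) v \<le> gnorm g (x (i + int k)) (Dfn f f' (x i) k v)))"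

definition partially_hyperbolic ::
  "'a::euclidean_space set \<Rightarrow> ('a \<Rightarrow> 'a) \<Rightarrow> ('a \<Rightarrow> 'a \<Rightarrow>\<^sub>L 'a) \<Rightarrow> ('a \<Rightarrow> 'a \<Rightarrow> 'a \<Rightarrow> real)
   \<Rightarrow> real \<Rightarrow> real \<Rightarrow> real \<Rightarrow> real \<Rightarrow> real \<Rightarrow> bool" where
  "partially_hyperbolic M f f' g \<nu> \<gamma>1 \<gamma>2 \<mu> C \<longleftrightarrow>
     C1_local_diffeo M f f' \<and> riemannian_metric M g \<and>
     0 < \<nu> \<and> \<nu> < \<gamma>1 \<and> \<gamma>1 \<le> \<gamma>2 \<and> \<gamma>2 < \<mu> \<and> \<nu> < 1 \<and> 1 < \<mu> \<and> C > 1 \<and>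
     (\<forall>x. is_orbit M f x \<longrightarrow> (\<exists>Es Ec Eu. ph_splitting M f f' g \<nu> \<gamma>1 \<gamma>2 \<mu> C x Es Ec Eu))"

definition center_direction where
  "center_direction M f f' g \<nu> \<gamma>1 \<gamma>2 \<mu> C p E \<longleftrightarrow>
     (\<exists>x Es Ec Eu. is_orbit M f x \<and> x 0 = p \<and>
        ph_splitting M f f' g \<nu> \<gamma>1 \<gamma>2 \<mu> C x Es Ec Eu \<and> E = Ec 0)"

definition unstable_direction where
  "unstable_direction M f f' g \<nu> \<gamma>1 \<gamma>2 \<mu> C p E \<longleftrightarrow>
     (\<exists>x Es Ec Eu. is_orbit M f x \<and> x 0 = p \<and>
        ph_splitting M f f' g \<nu> \<gamma>1 \<gamma>2 \<mu> C x Es Ec Eu \<and> E = Eu 0)"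

definition vec_angle :: "('a::euclidean_space \<Rightarrow> 'a \<Rightarrow> 'a \<Rightarrow> real) \<Rightarrow> 'a \<Rightarrow> 'a \<Rightarrow> 'a \<Rightarrow> real" where
  "vec_angle g x v w = arccos (g x v w / (gnorm g x v * gnorm g x w))"

definition subspace_angle :: "('a::euclidean_space \<Rightarrow> 'a \<Rightarrow> 'a \<Rightarrow> real) \<Rightarrow> 'a \<Rightarrow> 'a set \<Rightarrow> 'a set \<Rightarrow> real" where
  "subspace_angle g x E F =
     max (Sup ({Inf {vec_angle g x v w | w. w \<in> F - {0}} | v. v \<in> E - {0}} \<union> {0}))
         (Sup ({Inf {vec_angle g x w v | v. v \<in> E - {0}} | w. w \<in> F - {0}} \<union> {0}))"

end

theory Submission
  imports Defs
begin


definition ginner :: "('a::euclidean_space \<Rightarrow> 'a \<Rightarrow> 'a \<Rightarrow> real) \<Rightarrow> 'a \<Rightarrow> 'a set \<Rightarrow> bool" where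
  "ginner g q T \<longleftrightarrow> subspace T \<and> bilinear (g q) \<and> (\<forall>u v. g q u v = g q v u) \<and>
     (\<forall>v\<in>T. v \<noteq> 0 \<longrightarrow> g q v v > 0)"

lemma g_expand:
  assumes "bilinear (g q)" "\<forall>u v. g q u v = g q v u"
  shows "g q (v + t *\<^sub>R w) (v + t *\<^sub>R w) = g q v v + 2 * t * g q v w + t\<^sup>2 * g q w w"
proof -
  have "g q (v + t *\<^sub>R w) (v + t *\<^sub>R w) = g q v v + t * g q v w + t * g q w v + t * t * g q w w"
    using assms(1) by (simp add: bilinear_ladd bilinear_radd bilinear_lmul bilinear_rmul algebra_simps)
  then show ?thesis using assms(2) by (simp add: power2_eq_square algebra_simps)
qed

lemma g_zero[simp]:
  assumes "bilinear (g q)"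
  shows "g q 0 v = 0" "g q v 0 = 0"
  using assms by (auto simp: bilinear_lzero bilinear_rzero)

lemma gnorm_zero[simp]: "bilinear (g q) \<Longrightarrow> gnorm g q 0 = 0"
  by (simp add: gnorm_def)

lemma gpos: assumes "ginner g q T" "v \<in> T" shows "0 \<le> g q v v"
proof (cases "v = 0")
  case True then show ?thesis using assms unfolding ginner_def by (simp add: bilinear_lzero)
next
  case False
  then have "g q v v > 0" using assms unfolding ginner_def by blast
  then show ?thesis by linarith
qed

lemma gnorm_sq: assumes "ginner g q T" "v \<in> T" shows "(gnorm g q v)\<^sup>2 = g q v v"
  using gpos[OF assms] by (simp add: gnorm_def)

lemma gnorm_nonneg: assumes "ginner g q T" "v \<in> T" shows "gnorm g q v \<ge> 0"
  using gpos[OF assms] by (simp add: gnorm_def)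

lemma gnorm_pos: assumes "ginner g q T" "v \<in> T" "v \<noteq> 0" shows "gnorm g q v > 0"
  using assms unfolding ginner_def gnorm_def by auto

lemma gnorm_eq0: assumes "ginner g q T" "v \<in> T" shows "gnorm g q v = 0 \<longleftrightarrow> v = 0"
  using gnorm_pos[OF assms] assms unfolding ginner_def by (auto simp: gnorm_def bilinear_lzero)

lemma gnorm_scale: assumes "bilinear (g q)" shows "gnorm g q (c *\<^sub>R v) = \<bar>c\<bar> * gnorm g q v"
proof -
  have "g q (c *\<^sub>R v) (c *\<^sub>R v) = c\<^sup>2 * g q v v"
    using assms by (simp add: bilinear_lmul bilinear_rmul power2_eq_square)
  then show ?thesis by (simp add: gnorm_def real_sqrt_mult)
qed

lemma g_cs_sq:
  assumes "ginner g q T" "v \<in> T" "w \<in> T"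
  shows "(g q v w)\<^sup>2 \<le> g q v v * g q w w"
proof (cases "w = 0")
  case True then show ?thesis using assms unfolding ginner_def by simp
next
  case False
  have bl: "bilinear (g q)" and sy: "\<forall>u v. g q u v = g q v u" and sT: "subspace T"
    using assms(1) unfolding ginner_def by auto
  have pw: "g q w w > 0" using assms False unfolding ginner_def by auto
  define t where "t = - g q v w / g q w w"
  have "v + t *\<^sub>R w \<in> T" using sT assms by (simp add: subspace_add subspace_scale)
  then have "0 \<le> g q (v + t *\<^sub>R w) (v + t *\<^sub>R w)" using gpos assms(1) by blast
  also have "\<dots> = g q v v + 2 * t * g q v w + t\<^sup>2 * g q w w" by (rule g_expand[where g=g and q=q, OF bl sy])
  also have "\<dots> = g q v v - (g q v w)\<^sup>2 / g q w w"
    using pw by (simp add: t_def power2_eq_square field_simps)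
  finally have "(g q v w)\<^sup>2 / g q w w \<le> g q v v" by simp
  then show ?thesis using pw by (simp add: field_simps)
qed

lemma g_cs:
  assumes "ginner g q T" "v \<in> T" "w \<in> T"
  shows "\<bar>g q v w\<bar> \<le> gnorm g q v * gnorm g q w"
proof -
  have "(g q v w)\<^sup>2 \<le> (gnorm g q v * gnorm g q w)\<^sup>2"
    using g_cs_sq[OF assms] gnorm_sq[OF assms(1,2)] gnorm_sq[OF assms(1,3)]
    by (simp add: power_mult_distrib)
  then show ?thesis using gnorm_nonneg[OF assms(1,2)] gnorm_nonneg[OF assms(1,3)]
    by (metis abs_le_square_iff abs_mult abs_of_nonneg)
qed

lemma gnorm_triangle:
  assumes "ginner g q T" "v \<in> T" "w \<in> T"
  shows "gnorm g q (v + w) \<le> gnorm g q v + gnorm g q w"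
proof -
  have bl: "bilinear (g q)" and sy: "\<forall>u v. g q u v = g q v u" and sT: "subspace T"
    using assms(1) unfolding ginner_def by auto
  have vw: "v + w \<in> T" using sT assms by (simp add: subspace_add)
  have "(gnorm g q (v + w))\<^sup>2 = g q v v + 2 * g q v w + g q w w"
    using gnorm_sq[OF assms(1) vw] g_expand[where g=g and q=q, OF bl sy, of v 1 w] by simp
  also have "\<dots> \<le> (gnorm g q v)\<^sup>2 + 2 * (gnorm g q v * gnorm g q w) + (gnorm g q w)\<^sup>2"
    using g_cs[OF assms] gnorm_sq[OF assms(1,2)] gnorm_sq[OF assms(1,3)] by simp
  also have "\<dots> = (gnorm g q v + gnorm g q w)\<^sup>2" by (simp add: power2_eq_square algebra_simps)
  finally show ?thesis using gnorm_nonneg[OF assms(1,2)] gnorm_nonneg[OF assms(1,3)]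
    by (meson add_nonneg_nonneg power2_le_imp_le)
qed

lemma gnorm_minus: assumes "bilinear (g q)" shows "gnorm g q (- v) = gnorm g q v"
  using gnorm_scale[where g=g and q=q, OF assms, of "-1" v] by simp

lemma gnorm_triangle_diff:
  assumes "ginner g q T" "v \<in> T" "w \<in> T"
  shows "gnorm g q (v - w) \<le> gnorm g q v + gnorm g q w"
proof -
  have bl: "bilinear (g q)" and sT: "subspace T" using assms(1) unfolding ginner_def by auto
  have "- w \<in> T" using sT assms by (simp add: subspace_neg)
  then show ?thesis using gnorm_triangle[OF assms(1,2), of "-w"] gnorm_minus[where g=g and q=q, OF bl] by simp
qed

lemma gnorm_rev_triangle:
  assumes "ginner g q T" "v \<in> T" "w \<in> T"
  shows "gnorm g q v - gnorm g q w \<le> gnorm g q (v + w)"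
proof -
  have bl: "bilinear (g q)" and sT: "subspace T" using assms(1) unfolding ginner_def by auto
  have "v + w \<in> T" "- w \<in> T" using sT assms by (auto simp: subspace_neg subspace_add)
  then have "gnorm g q (v + w + - w) \<le> gnorm g q (v + w) + gnorm g q (- w)"
    using gnorm_triangle[OF assms(1)] by blast
  then show ?thesis using gnorm_minus[where g=g and q=q, OF bl] by simp
qed



lemma angle_bounds:
  assumes "ginner g q T" "v \<in> T" "w \<in> T" "v \<noteq> 0" "w \<noteq> 0"
  shows "0 \<le> vec_angle g q v w"
proof -
  have pv: "gnorm g q v > 0" using gnorm_pos[OF assms(1,2,4)] .
  have pw: "gnorm g q w > 0" using gnorm_pos[OF assms(1,3,5)] .
  have "\<bar>g q v w\<bar> \<le> gnorm g q v * gnorm g q w" using g_cs[OF assms(1,2,3)] .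
  then have "\<bar>g q v w / (gnorm g q v * gnorm g q w)\<bar> \<le> 1"
  proof -
    have pp: "0 < gnorm g q v * gnorm g q w" using pv pw by simp
    then show ?thesis using \<open>\<bar>g q v w\<bar> \<le> gnorm g q v * gnorm g q w\<close>
      by (simp only: abs_divide abs_of_pos pos_divide_le_eq)
  qed
  then have "- 1 \<le> g q v w / (gnorm g q v * gnorm g q w)" unfolding abs_le_iff by linarith
  then show ?thesis unfolding vec_angle_def using \<open>\<bar>g q v w / (gnorm g q v * gnorm g q w)\<bar> \<le> 1\<close>
    by (intro arccos_lbound) (auto simp only: abs_le_iff)
qed

lemma angle_small:
  assumes gi: "ginner g q T" and aT: "a \<in> T" and yT: "y \<in> T" and y0: "y \<noteq> 0"
    and le: "gnorm g q (a - y) \<le> e * gnorm g q y" and e0: "0 \<le> e" and e1: "e < 1"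
  shows "vec_angle g q a y \<le> arccos ((1 - e) / (1 + e))"
proof -
  have bl: "bilinear (g q)" and sT: "subspace T" using gi unfolding ginner_def by auto
  define x where "x = a - y"
  have xT: "x \<in> T" using sT aT yT by (simp add: x_def subspace_diff)
  have a_eq: "a = x + y" by (simp add: x_def)
  have py: "gnorm g q y > 0" using gnorm_pos[OF gi yT y0] .
  have nx: "gnorm g q x \<le> e * gnorm g q y" using le by (simp add: x_def)
  have gyy: "g q y y = (gnorm g q y)\<^sup>2" using gnorm_sq[OF gi yT] by simp
  have gay: "g q a y = g q x y + g q y y" using bl by (simp add: a_eq bilinear_ladd)
  have "\<bar>g q x y\<bar> \<le> gnorm g q x * gnorm g q y" using g_cs[OF gi xT yT] .
  also have "\<dots> \<le> e * gnorm g q y * gnorm g q y" using nx py by (simp add: mult_right_mono)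
  finally have gxy: "g q x y \<ge> - (e * (gnorm g q y)\<^sup>2)" by (simp add: power2_eq_square)
  have gay2: "g q a y \<ge> (1 - e) * (gnorm g q y)\<^sup>2" using gay gxy gyy by (simp add: algebra_simps)
  have na_le: "gnorm g q a \<le> (1 + e) * gnorm g q y"
    using gnorm_triangle[OF gi xT yT] nx a_eq by (simp add: algebra_simps)
  have na_ge: "gnorm g q a \<ge> (1 - e) * gnorm g q y"
    using gnorm_rev_triangle[OF gi yT xT] nx a_eq by (simp add: algebra_simps)
  have "(1 - e) * gnorm g q y > 0" using e1 py by simp
  then have pa: "gnorm g q a > 0" using na_ge by linarith
  define r where "r = g q a y / (gnorm g q a * gnorm g q y)"
  have r1: "r \<le> 1"
  proof -
    have "\<bar>g q a y\<bar> \<le> gnorm g q a * gnorm g q y" using g_cs[OF gi aT yT] .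
    moreover have pp: "0 < gnorm g q a * gnorm g q y" using pa py by simp
    ultimately show ?thesis unfolding r_def
      by (simp only: pos_divide_le_eq)
  qed
  have "(1 - e) * (gnorm g q y)\<^sup>2 \<ge> 0" using e1 by simp
  then have gay_nn: "g q a y \<ge> 0" using gay2 by linarith
  have "(1 - e) / (1 + e) = (1 - e) * (gnorm g q y)\<^sup>2 / ((1 + e) * gnorm g q y * gnorm g q y)"
    using py by (simp add: power2_eq_square)
  also have "\<dots> \<le> g q a y / ((1 + e) * gnorm g q y * gnorm g q y)"
    using gay2 py e0 by (intro divide_right_mono) auto
  also have "\<dots> \<le> g q a y / (gnorm g q a * gnorm g q y)"
    using gay_nn pa py na_le by (intro divide_left_mono mult_right_mono) auto
  finally have rge: "(1 - e) / (1 + e) \<le> r" by (simp add: r_def)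
  have "-1 \<le> (1 - e) / (1 + e)" using e0 e1 by (simp add: field_simps)
  then have "arccos r \<le> arccos ((1 - e) / (1 + e))"
    using rge r1 by (intro arccos_le_arccos) auto
  then show ?thesis by (simp add: vec_angle_def r_def)
qed

lemma arccos_choice:
  assumes "\<delta> > 0"
  shows "\<exists>e>0. e < 1 \<and> arccos ((1 - e) / (1 + e)) \<le> \<delta>"
proof -
  define d where "d = min \<delta> 1"
  have d0: "0 < d" "d \<le> 1" "d \<le> \<delta>" using assms by (auto simp: d_def)
  define c where "c = cos d"
  have c1: "c < 1" using cos_double_less_one[of "d/2"] d0 by (simp add: c_def)
  have "d < pi/2" using d0 pi_gt3 by linarith
  then have c0: "c > 0" using d0 by (simp add: c_def cos_gt_zero)
  define e where "e = (1 - c) / (1 + c)"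
  have e0: "e > 0" "e < 1" using c0 c1 by (auto simp: e_def field_simps)
  have "(1 - e) / (1 + e) = c" using c0 by (simp add: e_def field_simps)
  moreover have "arccos c = d" using d0 pi_gt3 by (simp add: c_def arccos_cos)
  ultimately show ?thesis using e0 d0 by (intro exI[of _ e]) auto
qed

definition hang :: "('a::euclidean_space \<Rightarrow> 'a \<Rightarrow> 'a \<Rightarrow> real) \<Rightarrow> 'a \<Rightarrow> 'a set \<Rightarrow> 'a set \<Rightarrow> real" where
  "hang g q E F = Sup ({Inf {vec_angle g q v w | w. w \<in> F - {0}} | v. v \<in> E - {0}} \<union> {0})"

lemma subspace_angle_hang: "subspace_angle g q E F = max (hang g q E F) (hang g q F E)"
  unfolding subspace_angle_def hang_def by simp

lemma hang_bounds:
  assumes e: "0 \<le> e" and ex: "\<forall>v\<in>E-{0}. \<exists>w\<in>F-{0}. vec_angle g q v w \<le> e"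
    and nn: "\<forall>v\<in>E-{0}. \<forall>w\<in>F-{0}. 0 \<le> vec_angle g q v w"
  shows "0 \<le> hang g q E F \<and> hang g q E F \<le> e"
proof -
  define A where "A = {Inf {vec_angle g q v w | w. w \<in> F - {0}} | v. v \<in> E - {0}} \<union> {0}"
  have inA: "0 \<le> a \<and> a \<le> e" if aA: "a \<in> A" for a
  proof (cases "a = 0")
    case True then show ?thesis using e by simp
  next
    case False
    then obtain v where v: "v \<in> E - {0}" and a: "a = Inf {vec_angle g q v w | w. w \<in> F - {0}}"
      using aA False unfolding A_def by blast
    obtain w where w: "w \<in> F - {0}" "vec_angle g q v w \<le> e" using ex v by blast
    have bdd: "bdd_below {vec_angle g q v w | w. w \<in> F - {0}}"
      using nn v by (auto intro!: bdd_belowI[of _ 0])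
    have ne: "{vec_angle g q v w | w. w \<in> F - {0}} \<noteq> {}" using w by blast
    have "a \<le> vec_angle g q v w" unfolding a using w bdd by (intro cInf_lower) auto
    moreover have "0 \<le> a" unfolding a using ne nn v by (intro cInf_greatest) auto
    ultimately show ?thesis using w by simp
  qed
  have "Sup A \<le> e" by (rule cSup_least) (use inA in \<open>auto simp: A_def\<close>)
  moreover have "0 \<le> Sup A"
    by (rule cSup_upper) (use inA in \<open>auto simp: A_def bdd_above_def\<close>)
  ultimately show ?thesis unfolding hang_def A_def by simp
qed




lemma orbit_iter: assumes "is_orbit M f x" shows "x (int n) = (f ^^ n) (x 0)"
proof (induction n)
  case 0 then show ?case by simp
next
  case (Suc n)
  have "int (Suc n) = int n + 1" by simp
  then have "x (int (Suc n)) = x (int n + 1)" by metis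
  also have "\<dots> = f (x (int n))" using assms unfolding is_orbit_def by metis
  finally show ?case using Suc by simp
qed

lemma orbit_in: assumes "is_orbit M f x" shows "x n \<in> M"
  using assms unfolding is_orbit_def by blast

lemma Dfn_add: "Dfn f f' p n (a + b) = Dfn f f' p n a + Dfn f f' p n b"
  by (induction n) (auto simp: blinfun.add_right)

lemma Dfn_diff: "Dfn f f' p n (a - b) = Dfn f f' p n a - Dfn f f' p n b"
  by (induction n) (auto simp: blinfun.diff_right)

lemma Dfn_scale: "Dfn f f' p n (c *\<^sub>R a) = c *\<^sub>R Dfn f f' p n a"
  by (induction n) (auto simp: blinfun.scaleR_right)

lemma Dfn_zero[simp]: "Dfn f f' p n 0 = 0"
  using Dfn_scale[of f f' p n 0 0] by simp

lemma Dfn_mem: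
  assumes inv: "\<forall>n. blinfun_apply (f' (x n)) ` E n = E (n + 1)"
    and orb: "\<forall>n::nat. x (int n) = (f ^^ n) p" and v: "v \<in> E 0"
  shows "Dfn f f' p n v \<in> E (int n)"
proof (induction n)
  case 0 then show ?case using v by simp
next
  case (Suc n)
  have "Dfn f f' p (Suc n) v = blinfun_apply (f' (x (int n))) (Dfn f f' p n v)"
    using orb by simp
  also have "\<dots> \<in> E (int n + 1)" using inv Suc by blast
  also have "int n + 1 = int (Suc n)" by simp
  finally show ?case .
qed

definition spl where
  "spl M f f' g \<nu> \<gamma>1 \<gamma>2 \<mu> C p x Es Ec Eu \<longleftrightarrow> is_orbit M f x \<and> x 0 = p \<and>
     ph_splitting M f f' g \<nu> \<gamma>1 \<gamma>2 \<mu> C x Es Ec Eu"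

lemma subspace_sum3:
  assumes "subspace A" "subspace B" "subspace D"
  shows "subspace {a + b + c | a b c. a \<in> A \<and> b \<in> B \<and> c \<in> D}"
  unfolding subspace_def
proof (intro conjI allI impI ballI)
  show "0 \<in> {a + b + c | a b c. a \<in> A \<and> b \<in> B \<and> c \<in> D}"
    using assms by (force intro: subspace_0)
next
  fix x y assume "x \<in> {a + b + c | a b c. a \<in> A \<and> b \<in> B \<and> c \<in> D}"
    "y \<in> {a + b + c | a b c. a \<in> A \<and> b \<in> B \<and> c \<in> D}"
  then obtain a b c a' b' c' where "x = a + b + c" "y = a' + b' + c'"
    "a \<in> A" "b \<in> B" "c \<in> D" "a' \<in> A" "b' \<in> B" "c' \<in> D" by blast
  moreover have "x + y = (a + a') + (b + b') + (c + c')" using calculation by (simp add: algebra_simps)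
  moreover have "a + a' \<in> A" "b + b' \<in> B" "c + c' \<in> D"
    using calculation assms by (auto simp: subspace_add)
  ultimately show "x + y \<in> {a + b + c | a b c. a \<in> A \<and> b \<in> B \<and> c \<in> D}" by blast
next
  fix k :: real and x assume "x \<in> {a + b + c | a b c. a \<in> A \<and> b \<in> B \<and> c \<in> D}"
  then obtain a b c where "x = a + b + c" "a \<in> A" "b \<in> B" "c \<in> D" by blast
  moreover have "k *\<^sub>R x = k *\<^sub>R a + k *\<^sub>R b + k *\<^sub>R c" using calculation by (simp add: scaleR_add_right)
  moreover have "k *\<^sub>R a \<in> A" "k *\<^sub>R b \<in> B" "k *\<^sub>R c \<in> D"
    using calculation assms by (auto simp: subspace_scale)
  ultimately show "k *\<^sub>R x \<in> {a + b + c | a b c. a \<in> A \<and> b \<in> B \<and> c \<in> D}" by blast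
qed

context
  fixes M :: "'a::euclidean_space set" and f :: "'a \<Rightarrow> 'a" and f' :: "'a \<Rightarrow> 'a \<Rightarrow>\<^sub>L 'a"
    and g :: "'a \<Rightarrow> 'a \<Rightarrow> 'a \<Rightarrow> real" and \<nu> \<gamma>1 \<gamma>2 \<mu> C :: real and p :: 'a
    and x :: "int \<Rightarrow> 'a" and Es Ec Eu :: "int \<Rightarrow> 'a set"
  assumes S: "spl M f f' g \<nu> \<gamma>1 \<gamma>2 \<mu> C p x Es Ec Eu"
begin

lemma spl_orb: "x (int n) = (f ^^ n) p"
  using S orbit_iter unfolding spl_def by metis

lemma spl_ph: "ph_splitting M f f' g \<nu> \<gamma>1 \<gamma>2 \<mu> C x Es Ec Eu"
  using S unfolding spl_def by blast

lemma spl_sub: "subspace (Es n)" "subspace (Ec n)" "subspace (Eu n)"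
  using spl_ph unfolding ph_splitting_def by blast+

lemma spl_T: "tangent_space M ((f ^^ n) p) =
   {a + b + c | a b c. a \<in> Es (int n) \<and> b \<in> Ec (int n) \<and> c \<in> Eu (int n)}"
  using spl_ph spl_orb[of n] unfolding ph_splitting_def by metis

lemma spl_Tsub: "subspace (tangent_space M ((f ^^ n) p))"
  unfolding spl_T by (intro subspace_sum3 spl_sub)

lemma spl_ginner:
  assumes "riemannian_metric M g"
  shows "ginner g ((f ^^ n) p) (tangent_space M ((f ^^ n) p))"
proof -
  have "x (int n) \<in> M" using S orbit_in unfolding spl_def by metis
  then have "(f ^^ n) p \<in> M" using spl_orb by simp
  then show ?thesis using assms spl_Tsub unfolding ginner_def riemannian_metric_def by blast
qed

lemma spl_inT:
  "v \<in> Es (int n) \<Longrightarrow> v \<in> tangent_space M ((f ^^ n) p)"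
  "v \<in> Ec (int n) \<Longrightarrow> v \<in> tangent_space M ((f ^^ n) p)"
  "v \<in> Eu (int n) \<Longrightarrow> v \<in> tangent_space M ((f ^^ n) p)"
proof -
  have z: "0 \<in> Es (int n)" "0 \<in> Ec (int n)" "0 \<in> Eu (int n)" by (simp_all add: subspace_0 spl_sub)
  show "v \<in> Es (int n) \<Longrightarrow> v \<in> tangent_space M ((f ^^ n) p)"
    unfolding spl_T using z by (metis (mono_tags, lifting) add.right_neutral mem_Collect_eq)
  show "v \<in> Ec (int n) \<Longrightarrow> v \<in> tangent_space M ((f ^^ n) p)"
    unfolding spl_T using z by (metis (mono_tags, lifting) add.right_neutral add.left_neutral mem_Collect_eq)
  show "v \<in> Eu (int n) \<Longrightarrow> v \<in> tangent_space M ((f ^^ n) p)"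
    unfolding spl_T using z by (metis (mono_tags, lifting) add.left_neutral mem_Collect_eq)
qed

lemma spl_A: "\<forall>n. subspace (Es n) \<and> subspace (Ec n) \<and> subspace (Eu n) \<and>
       {a + b + c | a b c. a \<in> Es n \<and> b \<in> Ec n \<and> c \<in> Eu n} = tangent_space M (x n) \<and>
       (\<forall>a b c. a \<in> Es n \<longrightarrow> b \<in> Ec n \<longrightarrow> c \<in> Eu n \<longrightarrow> a + b + c = 0 \<longrightarrow>
                a = 0 \<and> b = 0 \<and> c = 0) \<and>
       blinfun_apply (f' (x n)) ` Es n = Es (n + 1) \<and>
       blinfun_apply (f' (x n)) ` Ec n = Ec (n + 1) \<and>
       blinfun_apply (f' (x n)) ` Eu n = Eu (n + 1)"
  using spl_ph unfolding ph_splitting_def by (rule conjunct1)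

lemma spl_inv:
  "\<forall>n. blinfun_apply (f' (x n)) ` Es n = Es (n + 1)"
  "\<forall>n. blinfun_apply (f' (x n)) ` Ec n = Ec (n + 1)"
  "\<forall>n. blinfun_apply (f' (x n)) ` Eu n = Eu (n + 1)"
  using spl_A by meson+

lemma spl_direct:
  "a \<in> Es 0 \<Longrightarrow> b \<in> Ec 0 \<Longrightarrow> c \<in> Eu 0 \<Longrightarrow> a + b + c = 0 \<Longrightarrow> a = 0 \<and> b = 0 \<and> c = 0"
  using spl_A by meson

lemma spl_D:
  "v \<in> Es 0 \<Longrightarrow> Dfn f f' p n v \<in> Es (int n)"
  "v \<in> Ec 0 \<Longrightarrow> Dfn f f' p n v \<in> Ec (int n)"
  "v \<in> Eu 0 \<Longrightarrow> Dfn f f' p n v \<in> Eu (int n)"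
proof -
  have o: "\<forall>n::nat. x (int n) = (f^^n) p" using spl_orb by simp
  show "v \<in> Es 0 \<Longrightarrow> Dfn f f' p n v \<in> Es (int n)" by (rule Dfn_mem[OF spl_inv(1) o])
  show "v \<in> Ec 0 \<Longrightarrow> Dfn f f' p n v \<in> Ec (int n)" by (rule Dfn_mem[OF spl_inv(2) o])
  show "v \<in> Eu 0 \<Longrightarrow> Dfn f f' p n v \<in> Eu (int n)" by (rule Dfn_mem[OF spl_inv(3) o])
qed

lemma spl_rates:
  "v \<in> Es 0 \<Longrightarrow> gnorm g ((f ^^ n) p) (Dfn f f' p n v) \<le> C * \<nu> ^ n * gnorm g p v"
  "v \<in> Ec 0 \<Longrightarrow> inverse C * \<gamma>1 ^ n * gnorm g p v \<le> gnorm g ((f ^^ n) p) (Dfn f f' p n v)"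
  "v \<in> Ec 0 \<Longrightarrow> gnorm g ((f ^^ n) p) (Dfn f f' p n v) \<le> C * \<gamma>2 ^ n * gnorm g p v"
  "v \<in> Eu 0 \<Longrightarrow> inverse C * \<mu> ^ n * gnorm g p v \<le> gnorm g ((f ^^ n) p) (Dfn f f' p n v)"
proof -
  have x0: "x 0 = p" using S unfolding spl_def by blast
  have R: "\<forall>k::nat.
       (\<forall>v\<in>Es 0. gnorm g (x (0 + int k)) (Dfn f f' (x 0) k v) \<le> C * \<nu> ^ k * gnorm g (x 0) v) \<and>
       (\<forall>v\<in>Ec 0. inverse C * \<gamma>1 ^ k * gnorm g (x 0) v \<le> gnorm g (x (0 + int k)) (Dfn f f' (x 0) k v)
                 \<and> gnorm g (x (0 + int k)) (Dfn f f' (x 0) k v) \<le> C * \<gamma>2 ^ k * gnorm g (x 0) v) \<and>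
       (\<forall>v\<in>Eu 0. inverse C * \<mu> ^ k * gnorm g (x 0) v \<le> gnorm g (x (0 + int k)) (Dfn f f' (x 0) k v))"
    using spl_ph unfolding ph_splitting_def by (rule conjunct2[THEN spec])
  have e: "x (0 + int k) = (f ^^ k) p" for k using spl_orb by simp
  show "v \<in> Es 0 \<Longrightarrow> gnorm g ((f ^^ n) p) (Dfn f f' p n v) \<le> C * \<nu> ^ n * gnorm g p v"
    using spec[OF R, of n] by (simp add: spl_orb x0)
  show "v \<in> Ec 0 \<Longrightarrow> inverse C * \<gamma>1 ^ n * gnorm g p v \<le> gnorm g ((f ^^ n) p) (Dfn f f' p n v)"
    using spec[OF R, of n] by (simp add: spl_orb x0)
  show "v \<in> Ec 0 \<Longrightarrow> gnorm g ((f ^^ n) p) (Dfn f f' p n v) \<le> C * \<gamma>2 ^ n * gnorm g p v"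
    using spec[OF R, of n] by (simp add: spl_orb x0)
  show "v \<in> Eu 0 \<Longrightarrow> inverse C * \<mu> ^ n * gnorm g p v \<le> gnorm g ((f ^^ n) p) (Dfn f f' p n v)"
    using spec[OF R, of n] by (simp add: spl_orb x0)
qed

end




lemma small_by_pow:
  fixes a K r :: real
  assumes "\<forall>n. a \<le> K * r ^ n" "0 \<le> r" "r < 1"
  shows "a \<le> 0"
proof (rule ccontr)
  assume a: "\<not> a \<le> 0"
  have K: "K > 0"
  proof (rule ccontr)
    assume "\<not> K > 0"
    then show False using assms(1)[rule_format, of 0] a by simp
  qed
  obtain n where "r ^ n < a / K" using real_arch_pow_inv[of "a / K" r] a K assms by auto
  then have "K * r ^ n < a" using K by (simp add: field_simps)
  then show False using assms(1)[rule_format, of n] by simp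
qed

context
  fixes M :: "'a::euclidean_space set" and f :: "'a \<Rightarrow> 'a" and f' :: "'a \<Rightarrow> 'a \<Rightarrow>\<^sub>L 'a"
    and g :: "'a \<Rightarrow> 'a \<Rightarrow> 'a \<Rightarrow> real" and \<nu> \<gamma>1 \<gamma>2 \<mu> C :: real and p :: 'a
    and x :: "int \<Rightarrow> 'a" and Es Ec Eu :: "int \<Rightarrow> 'a set"
  assumes S: "spl M f f' g \<nu> \<gamma>1 \<gamma>2 \<mu> C p x Es Ec Eu"
    and RM: "riemannian_metric M g"
    and rates: "0 < \<nu>" "\<nu> < \<gamma>1" "\<gamma>1 \<le> \<gamma>2" "\<gamma>2 < \<mu>" "\<nu> < 1" "1 < \<mu>" "C > 1"
begin

lemma gi0: "ginner g p (tangent_space M p)"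
  using spl_ginner[OF S RM, of 0] by simp

lemma T0: "tangent_space M p = {a + b + c | a b c. a \<in> Es 0 \<and> b \<in> Ec 0 \<and> c \<in> Eu 0}"
  using spl_T[OF S, of 0] by simp

lemma inT0:
  "v \<in> Es 0 \<Longrightarrow> v \<in> tangent_space M p"
  "v \<in> Ec 0 \<Longrightarrow> v \<in> tangent_space M p"
  "v \<in> Eu 0 \<Longrightarrow> v \<in> tangent_space M p"
  using spl_inT[OF S, of v 0] by simp_all

lemma growth_u:
  assumes u: "u \<in> Eu 0" and b: "\<forall>n. gnorm g ((f ^^ n) p) (Dfn f f' p n u) \<le> K * \<gamma>2 ^ n"
  shows "u = 0"
proof -
  have N0: "gnorm g p u \<ge> 0" using gnorm_nonneg[OF gi0 inT0(3)[OF u]] .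
  have "gnorm g p u \<le> (C * K) * (\<gamma>2 / \<mu>) ^ n" for n
  proof -
    have "inverse C * \<mu> ^ n * gnorm g p u \<le> K * \<gamma>2 ^ n"
      using spl_rates(4)[OF S u, of n] b by (meson order_trans)
    moreover have "\<mu> ^ n > 0" using rates by simp
    ultimately show ?thesis using rates by (simp add: field_simps power_divide)
  qed
  then have "gnorm g p u \<le> 0"
    using rates by (intro small_by_pow[of _ "C * K" "\<gamma>2 / \<mu>"]) auto
  then have "gnorm g p u = 0" using N0 by simp
  then show ?thesis using gnorm_eq0[OF gi0 inT0(3)[OF u]] by simp
qed

lemma growth_s:
  assumes v: "v \<in> Es 0" and c: "c > 0"
    and b: "\<forall>n. c * \<gamma>1 ^ n * gnorm g p v \<le> gnorm g ((f ^^ n) p) (Dfn f f' p n v)"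
  shows "v = 0"
proof -
  have N0: "gnorm g p v \<ge> 0" using gnorm_nonneg[OF gi0 inT0(1)[OF v]] .
  have "gnorm g p v \<le> (C / c * gnorm g p v) * (\<nu> / \<gamma>1) ^ n" for n
  proof -
    have "c * \<gamma>1 ^ n * gnorm g p v \<le> C * \<nu> ^ n * gnorm g p v"
      using spl_rates(1)[OF S v, of n] b by (meson order_trans)
    moreover have "\<gamma>1 ^ n > 0" using rates by simp
    ultimately show ?thesis using rates c by (simp add: field_simps power_divide)
  qed
  then have "gnorm g p v \<le> 0"
    using rates by (intro small_by_pow[of _ "C / c * gnorm g p v" "\<nu> / \<gamma>1"]) auto
  then have "gnorm g p v = 0" using N0 by simp
  then show ?thesis using gnorm_eq0[OF gi0 inT0(1)[OF v]] by simp
qed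

lemma proj_exists:
  "\<exists>\<pi>. linear \<pi> \<and> (\<forall>v. \<pi> v \<in> Es 0 \<times> Ec 0 \<times> Eu 0) \<and>
      (\<forall>a b c. a \<in> Es 0 \<longrightarrow> b \<in> Ec 0 \<longrightarrow> c \<in> Eu 0 \<longrightarrow> \<pi> (a + b + c) = (a, b, c))"
proof -
  define \<sigma> :: "'a \<times> 'a \<times> 'a \<Rightarrow> 'a" where "\<sigma> = (\<lambda>(a, b, c). a + b + c)"
  have lin: "linear \<sigma>"
    by (rule linearI) (auto simp: \<sigma>_def split_beta algebra_simps scaleR_add_right)
  have sub: "subspace (Es 0 \<times> Ec 0 \<times> Eu 0)"
    by (intro subspace_Times spl_sub[OF S])
  have inj: "inj_on \<sigma> (Es 0 \<times> Ec 0 \<times> Eu 0)"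
  proof (rule inj_onI)
    fix X Y assume X: "X \<in> Es 0 \<times> Ec 0 \<times> Eu 0" and Y: "Y \<in> Es 0 \<times> Ec 0 \<times> Eu 0" and e: "\<sigma> X = \<sigma> Y"
    obtain a b c where Xe: "X = (a, b, c)" by (cases X) auto
    obtain a' b' c' where Ye: "Y = (a', b', c')" by (cases Y) auto
    have m: "a - a' \<in> Es 0" "b - b' \<in> Ec 0" "c - c' \<in> Eu 0"
      using X Y Xe Ye spl_sub[OF S] by (auto intro: subspace_diff)
    have "(a - a') + (b - b') + (c - c') = 0" using e Xe Ye by (simp add: \<sigma>_def algebra_simps)
    then have "a - a' = 0 \<and> b - b' = 0 \<and> c - c' = 0" using spl_direct[OF S m] by blast
    then show "X = Y" using Xe Ye by simp
  qed
  obtain \<pi> where \<pi>: "range \<pi> \<subseteq> Es 0 \<times> Ec 0 \<times> Eu 0" "linear \<pi>"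
    "\<forall>v\<in>Es 0 \<times> Ec 0 \<times> Eu 0. \<pi> (\<sigma> v) = v"
    using real_vector.linear_exists_left_inverse_on[OF lin sub inj] by blast
  show ?thesis
  proof (intro exI[of _ \<pi>] conjI allI impI)
    show "linear \<pi>" by fact
    show "\<pi> v \<in> Es 0 \<times> Ec 0 \<times> Eu 0" for v using \<pi>(1) by blast
    fix a b c assume "a \<in> Es 0" "b \<in> Ec 0" "c \<in> Eu 0"
    then show "\<pi> (a + b + c) = (a, b, c)" using \<pi>(3) by (auto simp: \<sigma>_def)
  qed
qed

end




lemma cont_gnorm_lin:
  fixes L :: "'a::euclidean_space \<Rightarrow> 'a" and g :: "'a \<Rightarrow> 'a \<Rightarrow> 'a \<Rightarrow> real"
  assumes RM: "riemannian_metric M g" and pM: "p \<in> M" and lin: "linear L"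
  shows "continuous_on K (\<lambda>v. gnorm g p (L v))"
proof -
  have cG: "continuous_on (M \<times> (UNIV \<times> UNIV)) (\<lambda>(x, u, v). g x u v)"
    using RM unfolding riemannian_metric_def by blast
  have "bounded_linear L" using lin unfolding linear_conv_bounded_linear .
  then have cL: "continuous_on K L" by (rule linear_continuous_on)
  have ch: "continuous_on K (\<lambda>v. (p, L v, L v))"
    by (intro continuous_on_Pair continuous_on_const cL)
  have "continuous_on K (\<lambda>v. (\<lambda>(x, u, v). g x u v) (p, L v, L v))"
    by (rule continuous_on_compose2[OF cG ch]) (use pM in auto)
  then have "continuous_on K (\<lambda>v. g p (L v) (L v))" by simp
  then show ?thesis unfolding gnorm_def by (rule continuous_on_real_sqrt)
qed

lemma ratio_bound:
  fixes L1 L2 :: "'a::euclidean_space \<Rightarrow> 'a"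
  assumes RM: "riemannian_metric M g" and pM: "p \<in> M" and gi: "ginner g p T"
    and E: "subspace E" and lin1: "linear L1" and lin2: "linear L2"
    and T1: "\<forall>v\<in>E. L1 v \<in> T" and T2: "\<forall>v\<in>E. L2 v \<in> T"
    and nz: "\<forall>v\<in>E. v \<noteq> 0 \<longrightarrow> L2 v \<noteq> 0"
  shows "\<exists>B\<ge>0. \<forall>v\<in>E. gnorm g p (L1 v) \<le> B * gnorm g p (L2 v)"
proof -
  have bl: "bilinear (g p)" using gi unfolding ginner_def by blast
  define K where "K = E \<inter> sphere 0 1"
  have scale: "gnorm g p (L v) = norm v * gnorm g p (L (v /\<^sub>R norm v))"
    if "linear L" for L v
  proof (cases "v = 0")
    case True
    then show ?thesis using that bl by (simp add: linear_0)
  next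
    case False
    have "L v = norm v *\<^sub>R L (v /\<^sub>R norm v)"
      using False that by (simp add: linear_scale)
    then show ?thesis using gnorm_scale[where g=g and q=p, OF bl] by simp
  qed
  show ?thesis
  proof (cases "K = {}")
    case True
    have z: "v = 0" if "v \<in> E" for v
    proof (rule ccontr)
      assume "v \<noteq> 0"
      then have "v /\<^sub>R norm v \<in> K" using that E by (simp add: K_def subspace_scale)
      then show False using True by blast
    qed
    show ?thesis
    proof (intro exI[of _ 0] conjI ballI)
      fix v assume "v \<in> E"
      then have "v = 0" by (rule z)
      then show "gnorm g p (L1 v) \<le> 0 * gnorm g p (L2 v)" using lin1 bl by (simp add: linear_0)
    qed simp
  next
    case False
    have cK: "compact K" unfolding K_def by (intro closed_Int_compact closed_subspace E compact_sphere)
    obtain v1 where v1: "v1 \<in> K" "\<forall>y\<in>K. gnorm g p (L1 y) \<le> gnorm g p (L1 v1)"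
      using continuous_attains_sup[OF cK False cont_gnorm_lin[OF RM pM lin1]] by blast
    obtain v2 where v2: "v2 \<in> K" "\<forall>y\<in>K. gnorm g p (L2 v2) \<le> gnorm g p (L2 y)"
      using continuous_attains_inf[OF cK False cont_gnorm_lin[OF RM pM lin2]] by blast
    have v2E: "v2 \<in> E" "v2 \<noteq> 0" using v2(1) by (auto simp: K_def)
    have m2: "gnorm g p (L2 v2) > 0"
      using gnorm_pos[OF gi] T2 nz v2E by blast
    have v1E: "v1 \<in> E" using v1(1) by (auto simp: K_def)
    have M1: "gnorm g p (L1 v1) \<ge> 0" using gnorm_nonneg[OF gi] T1 v1E by blast
    define B where "B = gnorm g p (L1 v1) / gnorm g p (L2 v2)"
    have B0: "B \<ge> 0" using M1 m2 by (simp add: B_def)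
    have "gnorm g p (L1 v) \<le> B * gnorm g p (L2 v)" if vE: "v \<in> E" for v
    proof (cases "v = 0")
      case True then show ?thesis using lin1 lin2 bl by (simp add: linear_0)
    next
      case False
      define u where "u = v /\<^sub>R norm v"
      have uK: "u \<in> K" using False vE E by (simp add: K_def u_def subspace_scale)
      have "gnorm g p (L1 u) \<le> gnorm g p (L1 v1)" using v1(2) uK by blast
      also have "\<dots> = B * gnorm g p (L2 v2)" using m2 by (simp add: B_def)
      also have "\<dots> \<le> B * gnorm g p (L2 u)" using v2(2) uK B0 by (simp add: mult_left_mono)
      finally have "norm v * gnorm g p (L1 u) \<le> norm v * (B * gnorm g p (L2 u))"
        by (simp add: mult_left_mono)
      then show ?thesis using scale[OF lin1, of v] scale[OF lin2, of v] by (simp add: u_def mult.left_commute)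
    qed
    then show ?thesis using B0 by blast
  qed
qed




lemma hang_conv:
  fixes D :: "nat \<Rightarrow> 'a::euclidean_space \<Rightarrow> 'a" and q :: "nat \<Rightarrow> 'a" and P :: "'a \<Rightarrow> 'a"
    and g :: "'a \<Rightarrow> 'a \<Rightarrow> 'a \<Rightarrow> real" and T :: "nat \<Rightarrow> 'a set"
  assumes gi: "\<forall>n. ginner g (q n) (T n)"
    and D0: "\<forall>n. D n 0 = 0"
    and T2: "\<forall>n. \<forall>v\<in>E2. D n v \<in> T n" and T1: "\<forall>n. \<forall>v\<in>E1. D n v \<in> T n"
    and P1: "\<forall>v\<in>E2. v \<noteq> 0 \<longrightarrow> P v \<in> E1 \<and> (\<forall>n. gnorm g (q n) (D n (P v)) > 0)"
    and rho: "0 \<le> \<rho>" "\<rho> < 1"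
    and ratio: "\<forall>v\<in>E2. v \<noteq> 0 \<longrightarrow> (\<forall>n. gnorm g (q n) (D n v - D n (P v)) \<le> K * \<rho> ^ n * gnorm g (q n) (D n (P v)))"
    and dpos: "\<delta> > 0"
  shows "\<exists>N. \<forall>n\<ge>N. 0 \<le> hang g (q n) (D n ` E2) (D n ` E1) \<and> hang g (q n) (D n ` E2) (D n ` E1) \<le> \<delta>"
proof -
  obtain e where e: "e > 0" "e < 1" "arccos ((1 - e) / (1 + e)) \<le> \<delta>"
    using arccos_choice[OF dpos] by blast
  obtain N where N: "\<forall>n\<ge>N. K * \<rho> ^ n \<le> e"
  proof (cases "K \<le> 0")
    case True
    then have "K * \<rho> ^ n \<le> e" for n using rho e by (smt (verit) mult_nonpos_nonneg zero_le_power)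
    then show ?thesis using that by blast
  next
    case False
    obtain N where "\<rho> ^ N < e / K" using real_arch_pow_inv[of "e / K" \<rho>] e False rho by auto
    then have "K * \<rho> ^ N < e" using False by (simp add: field_simps)
    moreover have "K * \<rho> ^ n \<le> K * \<rho> ^ N" if "n \<ge> N" for n
      using False rho that by (simp add: power_decreasing)
    ultimately show ?thesis using that by force
  qed
  have "0 \<le> hang g (q n) (D n ` E2) (D n ` E1) \<and> hang g (q n) (D n ` E2) (D n ` E1) \<le> \<delta>" if nN: "n \<ge> N" for n
  proof (rule hang_bounds)
    have gin: "ginner g (q n) (T n)" using gi by blast
    have bl: "bilinear (g (q n))" using gin unfolding ginner_def by blast
    show "0 \<le> \<delta>" using dpos by simp
    show "\<forall>a\<in>D n ` E2 - {0}. \<exists>w\<in>D n ` E1 - {0}. vec_angle g (q n) a w \<le> \<delta>"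
    proof
      fix a assume a: "a \<in> D n ` E2 - {0}"
      then obtain v where v: "v \<in> E2" "a = D n v" by blast
      have v0: "v \<noteq> 0" using a v D0 by auto
      have Pv: "P v \<in> E1" "gnorm g (q n) (D n (P v)) > 0" using P1 v v0 by blast+
      have w0: "D n (P v) \<noteq> 0" using Pv(2) bl by auto
      have aT: "a \<in> T n" using T2 v by blast
      have wT: "D n (P v) \<in> T n" using T1 Pv by blast
      have "gnorm g (q n) (a - D n (P v)) \<le> K * \<rho> ^ n * gnorm g (q n) (D n (P v))"
        using ratio v v0 by blast
      also have "\<dots> \<le> e * gnorm g (q n) (D n (P v))"
        using N nN Pv(2) by (simp add: mult_right_mono)
      finally have le: "gnorm g (q n) (a - D n (P v)) \<le> e * gnorm g (q n) (D n (P v))" .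
      have "vec_angle g (q n) a (D n (P v)) \<le> arccos ((1 - e) / (1 + e))"
        using angle_small[OF gin aT wT w0 le] e by simp
      then have "vec_angle g (q n) a (D n (P v)) \<le> \<delta>" using e by linarith
      moreover have "D n (P v) \<in> D n ` E1 - {0}" using Pv w0 by blast
      ultimately show "\<exists>w\<in>D n ` E1 - {0}. vec_angle g (q n) a w \<le> \<delta>" by blast
    qed
    show "\<forall>a\<in>D n ` E2 - {0}. \<forall>w\<in>D n ` E1 - {0}. 0 \<le> vec_angle g (q n) a w"
    proof (intro ballI)
      fix a w assume a: "a \<in> D n ` E2 - {0}" and w: "w \<in> D n ` E1 - {0}"
      have aT: "a \<in> T n" using a T2 by blast
      have wT: "w \<in> T n" using w T1 by blast
      show "0 \<le> vec_angle g (q n) a w" using angle_bounds[OF gin aT wT] a w by blast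
    qed
  qed
  then show ?thesis by blast
qed




context
  fixes M :: "'a::euclidean_space set" and f :: "'a \<Rightarrow> 'a" and f' :: "'a \<Rightarrow> 'a \<Rightarrow>\<^sub>L 'a"
    and g :: "'a \<Rightarrow> 'a \<Rightarrow> 'a \<Rightarrow> real" and \<nu> \<gamma>1 \<gamma>2 \<mu> C :: real and p :: 'a
    and x :: "int \<Rightarrow> 'a" and Es Ec Eu :: "int \<Rightarrow> 'a set"
  assumes S: "spl M f f' g \<nu> \<gamma>1 \<gamma>2 \<mu> C p x Es Ec Eu"
    and RM: "riemannian_metric M g"
    and rates: "0 < \<nu>" "\<nu> < \<gamma>1" "\<gamma>1 \<le> \<gamma>2" "\<gamma>2 < \<mu>" "\<nu> < 1" "1 < \<mu>" "C > 1"
begin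

lemma proj_funs:
  obtains ps pc pu where "linear ps" "linear pc" "linear pu"
    "\<And>v. ps v \<in> Es 0" "\<And>v. pc v \<in> Ec 0" "\<And>v. pu v \<in> Eu 0"
    "\<And>v. v \<in> tangent_space M p \<Longrightarrow> v = ps v + pc v + pu v"
proof -
  obtain \<pi> where \<pi>: "linear \<pi>" "\<forall>v. \<pi> v \<in> Es 0 \<times> Ec 0 \<times> Eu 0"
      "\<forall>a b c. a \<in> Es 0 \<longrightarrow> b \<in> Ec 0 \<longrightarrow> c \<in> Eu 0 \<longrightarrow> \<pi> (a + b + c) = (a, b, c)"
    using proj_exists[OF S RM rates] by blast
  have l1: "linear (\<lambda>v. fst (\<pi> v))"
    using linear_compose[OF \<pi>(1) real_vector.linear_fst] by (simp add: o_def)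
  have l2: "linear (\<lambda>v. fst (snd (\<pi> v)))"
    using linear_compose[OF linear_compose[OF \<pi>(1) real_vector.linear_snd] real_vector.linear_fst]
    by (simp add: o_def)
  have l3: "linear (\<lambda>v. snd (snd (\<pi> v)))"
    using linear_compose[OF linear_compose[OF \<pi>(1) real_vector.linear_snd] real_vector.linear_snd]
    by (simp add: o_def)
  have m: "fst (\<pi> v) \<in> Es 0" "fst (snd (\<pi> v)) \<in> Ec 0" "snd (snd (\<pi> v)) \<in> Eu 0" for v
    using \<pi>(2) by (auto simp: mem_Times_iff)
  have d: "v = fst (\<pi> v) + fst (snd (\<pi> v)) + snd (snd (\<pi> v))" if vT: "v \<in> tangent_space M p" for v
  proof -
    obtain a b c where "v = a + b + c" "a \<in> Es 0" "b \<in> Ec 0" "c \<in> Eu 0"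
      using vT T0[OF S RM rates] by blast
    then show ?thesis using \<pi>(3) by simp
  qed
  show ?thesis by (rule that[OF l1 l2 l3 m d])
qed

end

lemma pow_le_pow: "0 \<le> a \<Longrightarrow> a \<le> b \<Longrightarrow> (a::real) ^ n \<le> b ^ n"
  by (rule power_mono)




lemma center_half:
  fixes M :: "'a::euclidean_space set" and f :: "'a \<Rightarrow> 'a" and f' :: "'a \<Rightarrow> 'a \<Rightarrow>\<^sub>L 'a"
    and g :: "'a \<Rightarrow> 'a \<Rightarrow> 'a \<Rightarrow> real" and \<nu> \<gamma>1 \<gamma>2 \<mu> C :: real and p :: 'a
  assumes S1: "spl M f f' g \<nu> \<gamma>1 \<gamma>2 \<mu> C p x1 Es1 Ec1 Eu1"
    and S2: "spl M f f' g \<nu> \<gamma>1 \<gamma>2 \<mu> C p x2 Es2 Ec2 Eu2"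
    and RM: "riemannian_metric M g"
    and rates: "0 < \<nu>" "\<nu> < \<gamma>1" "\<gamma>1 \<le> \<gamma>2" "\<gamma>2 < \<mu>" "\<nu> < 1" "1 < \<mu>" "C > 1"
    and pM: "p \<in> M" and dpos: "\<delta> > 0"
  shows "\<exists>N. \<forall>n\<ge>N. 0 \<le> hang g ((f ^^ n) p) (Dfn f f' p n ` Ec2 0) (Dfn f f' p n ` Ec1 0)
                  \<and> hang g ((f ^^ n) p) (Dfn f f' p n ` Ec2 0) (Dfn f f' p n ` Ec1 0) \<le> \<delta>"
proof -
  obtain ps pc pu where lin: "linear ps" "linear pc" "linear pu"
    and mem: "\<And>v. ps v \<in> Es1 0" "\<And>v. pc v \<in> Ec1 0" "\<And>v. pu v \<in> Eu1 0"
    and dec: "\<And>v. v \<in> tangent_space M p \<Longrightarrow> v = ps v + pc v + pu v"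
    using proj_funs[OF S1 RM rates] by metis
  let ?q = "\<lambda>n. (f ^^ n) p"
  let ?T = "\<lambda>n. tangent_space M ((f ^^ n) p)"
  let ?D = "\<lambda>n. Dfn f f' p n"
  have gin: "ginner g (?q n) (?T n)" for n using spl_ginner[OF S1 RM] .
  have gi0: "ginner g p (tangent_space M p)" using gi0[OF S1 RM rates] .
  have sT: "subspace (?T n)" for n using spl_Tsub[OF S1] .
  have C0: "C > 0" "inverse C > 0" using rates by auto
  have v0T: "v \<in> tangent_space M p" if "v \<in> Ec2 0" for v using inT0(2)[OF S2 RM rates that] .
  have N0nn: "gnorm g p w \<ge> 0" if "w \<in> tangent_space M p" for w using gnorm_nonneg[OF gi0 that] .
  have Nnn: "gnorm g (?q n) w \<ge> 0" if "w \<in> ?T n" for w n using gnorm_nonneg[OF gin that] .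
  have psT: "ps v \<in> tangent_space M p" "pc v \<in> tangent_space M p" "pu v \<in> tangent_space M p" for v
    using inT0[OF S1 RM rates] mem by blast+
  have DsT: "?D n (ps v) \<in> ?T n" "?D n (pc v) \<in> ?T n" "?D n (pu v) \<in> ?T n" for n v
    using spl_inT[OF S1] spl_D[OF S1] mem by blast+
  have D2T: "?D n v \<in> ?T n" if "v \<in> Ec2 0" for n v
    using spl_inT(2)[OF S2 spl_D(2)[OF S2 that]] .
  have pu0: "pu v = 0" if v: "v \<in> Ec2 0" for v
  proof (rule growth_u[OF S1 RM rates mem(3)], intro allI)
    fix n
    have e: "pu v = v - ps v - pc v" using dec[OF v0T[OF v]] by (simp add: algebra_simps)
    have "?D n (pu v) = (?D n v - ?D n (ps v)) - ?D n (pc v)" by (simp add: e Dfn_diff)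
    moreover have "?D n v - ?D n (ps v) \<in> ?T n" using sT D2T[OF v] DsT by (simp add: subspace_diff)
    ultimately have "gnorm g (?q n) (?D n (pu v)) \<le> gnorm g (?q n) (?D n v - ?D n (ps v)) + gnorm g (?q n) (?D n (pc v))"
      using gnorm_triangle_diff[OF gin _ DsT(2)] by simp
    also have "\<dots> \<le> gnorm g (?q n) (?D n v) + gnorm g (?q n) (?D n (ps v)) + gnorm g (?q n) (?D n (pc v))"
      using gnorm_triangle_diff[OF gin D2T[OF v] DsT(1)] by simp
    also have "\<dots> \<le> C * \<gamma>2 ^ n * gnorm g p v + C * \<nu> ^ n * gnorm g p (ps v) + C * \<gamma>2 ^ n * gnorm g p (pc v)"
      using spl_rates(3)[OF S2 v, of n] spl_rates(1)[OF S1 mem(1)[of v], of n] spl_rates(3)[OF S1 mem(2)[of v], of n]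
      by linarith
    also have "\<dots> \<le> C * \<gamma>2 ^ n * gnorm g p v + C * \<gamma>2 ^ n * gnorm g p (ps v) + C * \<gamma>2 ^ n * gnorm g p (pc v)"
    proof -
      have "\<nu> ^ n \<le> \<gamma>2 ^ n" using rates by (intro power_mono) auto
      then have "C * \<nu> ^ n * gnorm g p (ps v) \<le> C * \<gamma>2 ^ n * gnorm g p (ps v)"
        using C0 N0nn[OF psT(1)] by (intro mult_right_mono mult_left_mono) auto
      then show ?thesis by linarith
    qed
    also have "\<dots> = (C * (gnorm g p v + gnorm g p (ps v) + gnorm g p (pc v))) * \<gamma>2 ^ n"
      by (simp add: algebra_simps)
    finally show "gnorm g (?q n) (?D n (pu v)) \<le> (C * (gnorm g p v + gnorm g p (ps v) + gnorm g p (pc v))) * \<gamma>2 ^ n" .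
  qed
  have dec2: "v = ps v + pc v" if v: "v \<in> Ec2 0" for v
    using dec[OF v0T[OF v]] pu0[OF v] by simp
  have pc_nz: "pc v \<noteq> 0" if v: "v \<in> Ec2 0" "v \<noteq> 0" for v
  proof
    assume "pc v = 0"
    then have vs: "v = ps v" using dec2[OF v(1)] by simp
    have "v \<in> Es1 0" using mem(1)[of v] vs by metis
    moreover have "\<forall>n. inverse C * \<gamma>1 ^ n * gnorm g p v \<le> gnorm g (?q n) (?D n v)"
      using spl_rates(2)[OF S2 v(1)] by blast
    ultimately have "v = 0" using growth_s[OF S1 RM rates _ C0(2)] by blast
    then show False using v by blast
  qed
  obtain B where B: "B \<ge> 0" "\<forall>v\<in>Ec2 0. gnorm g p (ps v) \<le> B * gnorm g p (pc v)"
    using ratio_bound[OF RM pM gi0 spl_sub(2)[OF S2] lin(1) lin(2)] psT pc_nz by blast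
  have N0pc: "gnorm g p (pc v) > 0" if v: "v \<in> Ec2 0" "v \<noteq> 0" for v
    using gnorm_pos[OF gi0 psT(2) pc_nz[OF v]] .
  show ?thesis
  proof (rule hang_conv[where P = pc and T = ?T and \<rho> = "\<nu> / \<gamma>1" and K = "C * C * B"])
    show "\<forall>n. ginner g (?q n) (?T n)" using gin by blast
    show "\<forall>n. ?D n 0 = 0" by simp
    show "\<forall>n. \<forall>v\<in>Ec2 0. ?D n v \<in> ?T n" using D2T by blast
    show "\<forall>n. \<forall>v\<in>Ec1 0. ?D n v \<in> ?T n" using spl_inT(2)[OF S1 spl_D(2)[OF S1]] by blast
    show "0 \<le> \<nu> / \<gamma>1" "\<nu> / \<gamma>1 < 1" using rates by auto
    show "0 < \<delta>" by fact
    show "\<forall>v\<in>Ec2 0. v \<noteq> 0 \<longrightarrow> pc v \<in> Ec1 0 \<and> (\<forall>n. gnorm g (?q n) (?D n (pc v)) > 0)"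
    proof (intro ballI impI conjI allI)
      fix v n assume v: "v \<in> Ec2 0" "v \<noteq> 0"
      show "pc v \<in> Ec1 0" by (rule mem(2))
      have "inverse C * \<gamma>1 ^ n * gnorm g p (pc v) > 0" using C0 rates N0pc[OF v] by simp
      then show "gnorm g (?q n) (?D n (pc v)) > 0" using spl_rates(2)[OF S1 mem(2)[of v], of n] by linarith
    qed
    show "\<forall>v\<in>Ec2 0. v \<noteq> 0 \<longrightarrow> (\<forall>n. gnorm g (?q n) (?D n v - ?D n (pc v)) \<le> C * C * B * (\<nu> / \<gamma>1) ^ n * gnorm g (?q n) (?D n (pc v)))"
    proof (intro ballI impI allI)
      fix v n assume v: "v \<in> Ec2 0" "v \<noteq> 0"
      have "?D n v - ?D n (pc v) = ?D n (ps v)"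
        using dec2[OF v(1)] by (metis Dfn_diff add_diff_cancel_right')
      then have "gnorm g (?q n) (?D n v - ?D n (pc v)) \<le> C * \<nu> ^ n * gnorm g p (ps v)"
        using spl_rates(1)[OF S1 mem(1)[of v], of n] by simp
      also have "\<dots> \<le> C * \<nu> ^ n * (B * gnorm g p (pc v))"
        using B(2) v(1) C0 rates by (intro mult_left_mono) auto
      also have "\<dots> = (C * C * B * (\<nu> / \<gamma>1) ^ n) * (inverse C * \<gamma>1 ^ n * gnorm g p (pc v))"
        using rates C0 by (simp add: field_simps power_divide)
      also have "\<dots> \<le> (C * C * B * (\<nu> / \<gamma>1) ^ n) * gnorm g (?q n) (?D n (pc v))"
        using spl_rates(2)[OF S1 mem(2)[of v], of n] B(1) C0 rates
        by (intro mult_left_mono) auto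
      finally show "gnorm g (?q n) (?D n v - ?D n (pc v)) \<le> C * C * B * (\<nu> / \<gamma>1) ^ n * gnorm g (?q n) (?D n (pc v))" .
    qed
  qed
qed




lemma unstable_half:
  fixes M :: "'a::euclidean_space set" and f :: "'a \<Rightarrow> 'a" and f' :: "'a \<Rightarrow> 'a \<Rightarrow>\<^sub>L 'a"
    and g :: "'a \<Rightarrow> 'a \<Rightarrow> 'a \<Rightarrow> real" and \<nu> \<gamma>1 \<gamma>2 \<mu> C :: real and p :: 'a
  assumes S1: "spl M f f' g \<nu> \<gamma>1 \<gamma>2 \<mu> C p x1 Es1 Ec1 Eu1"
    and S2: "spl M f f' g \<nu> \<gamma>1 \<gamma>2 \<mu> C p x2 Es2 Ec2 Eu2"
    and RM: "riemannian_metric M g"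
    and rates: "0 < \<nu>" "\<nu> < \<gamma>1" "\<gamma>1 \<le> \<gamma>2" "\<gamma>2 < \<mu>" "\<nu> < 1" "1 < \<mu>" "C > 1"
    and pM: "p \<in> M" and dpos: "\<delta> > 0"
  shows "\<exists>N. \<forall>n\<ge>N. 0 \<le> hang g ((f ^^ n) p) (Dfn f f' p n ` Eu2 0) (Dfn f f' p n ` Eu1 0)
                  \<and> hang g ((f ^^ n) p) (Dfn f f' p n ` Eu2 0) (Dfn f f' p n ` Eu1 0) \<le> \<delta>"
proof -
  obtain ps pc pu where lin: "linear ps" "linear pc" "linear pu"
    and mem: "\<And>v. ps v \<in> Es1 0" "\<And>v. pc v \<in> Ec1 0" "\<And>v. pu v \<in> Eu1 0"
    and dec: "\<And>v. v \<in> tangent_space M p \<Longrightarrow> v = ps v + pc v + pu v"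
    using proj_funs[OF S1 RM rates] by metis
  let ?q = "\<lambda>n. (f ^^ n) p"
  let ?T = "\<lambda>n. tangent_space M ((f ^^ n) p)"
  let ?D = "\<lambda>n. Dfn f f' p n"
  have gin: "ginner g (?q n) (?T n)" for n using spl_ginner[OF S1 RM] .
  have gi0: "ginner g p (tangent_space M p)" using gi0[OF S1 RM rates] .
  have sT: "subspace (?T n)" for n using spl_Tsub[OF S1] .
  have C0: "C > 0" "inverse C > 0" using rates by auto
  have v0T: "v \<in> tangent_space M p" if "v \<in> Eu2 0" for v using inT0(3)[OF S2 RM rates that] .
  have N0nn: "gnorm g p w \<ge> 0" if "w \<in> tangent_space M p" for w using gnorm_nonneg[OF gi0 that] .
  have psT: "ps v \<in> tangent_space M p" "pc v \<in> tangent_space M p" "pu v \<in> tangent_space M p" for v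
    using inT0[OF S1 RM rates] mem by blast+
  have DsT: "?D n (ps v) \<in> ?T n" "?D n (pc v) \<in> ?T n" "?D n (pu v) \<in> ?T n" for n v
    using spl_inT[OF S1] spl_D[OF S1] mem by blast+
  have D2T: "?D n v \<in> ?T n" if "v \<in> Eu2 0" for n v
    using spl_inT(3)[OF S2 spl_D(3)[OF S2 that]] .
  have nu_le: "\<nu> ^ n \<le> \<gamma>2 ^ n" for n using rates by (intro power_mono) auto
  have sc_bound: "gnorm g (?q n) (?D n (ps v) + ?D n (pc v)) \<le> C * \<gamma>2 ^ n * (gnorm g p (ps v) + gnorm g p (pc v))" for n v
  proof -
    have "gnorm g (?q n) (?D n (ps v) + ?D n (pc v)) \<le> gnorm g (?q n) (?D n (ps v)) + gnorm g (?q n) (?D n (pc v))"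
      using gnorm_triangle[OF gin DsT(1) DsT(2)] .
    also have "\<dots> \<le> C * \<nu> ^ n * gnorm g p (ps v) + C * \<gamma>2 ^ n * gnorm g p (pc v)"
      using spl_rates(1)[OF S1 mem(1)[of v], of n] spl_rates(3)[OF S1 mem(2)[of v], of n] by linarith
    also have "\<dots> \<le> C * \<gamma>2 ^ n * gnorm g p (ps v) + C * \<gamma>2 ^ n * gnorm g p (pc v)"
    proof -
      have "C * \<nu> ^ n * gnorm g p (ps v) \<le> C * \<gamma>2 ^ n * gnorm g p (ps v)"
        using C0 N0nn[OF psT(1)] nu_le[of n] by (intro mult_right_mono mult_left_mono) auto
      then show ?thesis by linarith
    qed
    finally show ?thesis by (simp add: algebra_simps)
  qed
  have pu_nz: "pu v \<noteq> 0" if v: "v \<in> Eu2 0" "v \<noteq> 0" for v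
  proof
    assume "pu v = 0"
    then have vs: "v = ps v + pc v" using dec[OF v0T[OF v(1)]] by simp
    have "\<forall>n. gnorm g (?q n) (?D n v) \<le> (C * (gnorm g p (ps v) + gnorm g p (pc v))) * \<gamma>2 ^ n"
    proof
      fix n
      have "?D n v = ?D n (ps v) + ?D n (pc v)" using vs by (metis Dfn_add)
      then show "gnorm g (?q n) (?D n v) \<le> (C * (gnorm g p (ps v) + gnorm g p (pc v))) * \<gamma>2 ^ n"
        using sc_bound[of n v] by (simp add: algebra_simps)
    qed
    then have "v = 0" using growth_u[OF S2 RM rates v(1)] by blast
    then show False using v by blast
  qed
  obtain B1 where B1: "B1 \<ge> 0" "\<forall>v\<in>Eu2 0. gnorm g p (ps v) \<le> B1 * gnorm g p (pu v)"
    using ratio_bound[OF RM pM gi0 spl_sub(3)[OF S2] lin(1) lin(3)] psT pu_nz by blast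
  obtain B2 where B2: "B2 \<ge> 0" "\<forall>v\<in>Eu2 0. gnorm g p (pc v) \<le> B2 * gnorm g p (pu v)"
    using ratio_bound[OF RM pM gi0 spl_sub(3)[OF S2] lin(2) lin(3)] psT pu_nz by blast
  have N0pu: "gnorm g p (pu v) > 0" if v: "v \<in> Eu2 0" "v \<noteq> 0" for v
    using gnorm_pos[OF gi0 psT(3) pu_nz[OF v]] .
  show ?thesis
  proof (rule hang_conv[where P = pu and T = ?T and \<rho> = "\<gamma>2 / \<mu>" and K = "C * C * (B1 + B2)"])
    show "\<forall>n. ginner g (?q n) (?T n)" using gin by blast
    show "\<forall>n. ?D n 0 = 0" by simp
    show "\<forall>n. \<forall>v\<in>Eu2 0. ?D n v \<in> ?T n" using D2T by blast
    show "\<forall>n. \<forall>v\<in>Eu1 0. ?D n v \<in> ?T n" using spl_inT(3)[OF S1 spl_D(3)[OF S1]] by blast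
    show "0 \<le> \<gamma>2 / \<mu>" "\<gamma>2 / \<mu> < 1" using rates by auto
    show "0 < \<delta>" by fact
    show "\<forall>v\<in>Eu2 0. v \<noteq> 0 \<longrightarrow> pu v \<in> Eu1 0 \<and> (\<forall>n. gnorm g (?q n) (?D n (pu v)) > 0)"
    proof (intro ballI impI conjI allI)
      fix v n assume v: "v \<in> Eu2 0" "v \<noteq> 0"
      show "pu v \<in> Eu1 0" by (rule mem(3))
      have "inverse C * \<mu> ^ n * gnorm g p (pu v) > 0" using C0 rates N0pu[OF v] by simp
      then show "gnorm g (?q n) (?D n (pu v)) > 0" using spl_rates(4)[OF S1 mem(3)[of v], of n] by linarith
    qed
    show "\<forall>v\<in>Eu2 0. v \<noteq> 0 \<longrightarrow> (\<forall>n. gnorm g (?q n) (?D n v - ?D n (pu v)) \<le> C * C * (B1 + B2) * (\<gamma>2 / \<mu>) ^ n * gnorm g (?q n) (?D n (pu v)))"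
    proof (intro ballI impI allI)
      fix v n assume v: "v \<in> Eu2 0" "v \<noteq> 0"
      have "?D n v - ?D n (pu v) = ?D n (ps v) + ?D n (pc v)"
        using dec[OF v0T[OF v(1)]] by (metis Dfn_add add_diff_cancel_right')
      then have "gnorm g (?q n) (?D n v - ?D n (pu v)) \<le> C * \<gamma>2 ^ n * (gnorm g p (ps v) + gnorm g p (pc v))"
        using sc_bound[of n v] by simp
      also have "\<dots> \<le> C * \<gamma>2 ^ n * ((B1 + B2) * gnorm g p (pu v))"
      proof -
        have "gnorm g p (ps v) \<le> B1 * gnorm g p (pu v)" "gnorm g p (pc v) \<le> B2 * gnorm g p (pu v)"
          using B1(2) B2(2) v(1) by blast+
        then have "gnorm g p (ps v) + gnorm g p (pc v) \<le> (B1 + B2) * gnorm g p (pu v)"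
          by (simp add: distrib_right)
        then show ?thesis using C0 rates by (intro mult_left_mono) auto
      qed
      also have "\<dots> = (C * C * (B1 + B2) * (\<gamma>2 / \<mu>) ^ n) * (inverse C * \<mu> ^ n * gnorm g p (pu v))"
        using rates C0 by (simp add: field_simps power_divide)
      also have "\<dots> \<le> (C * C * (B1 + B2) * (\<gamma>2 / \<mu>) ^ n) * gnorm g (?q n) (?D n (pu v))"
        using spl_rates(4)[OF S1 mem(3)[of v], of n] B1(1) B2(1) C0 rates
        by (intro mult_left_mono) auto
      finally show "gnorm g (?q n) (?D n v - ?D n (pu v)) \<le> C * C * (B1 + B2) * (\<gamma>2 / \<mu>) ^ n * gnorm g (?q n) (?D n (pu v))" .
    qed
  qed
qed




lemma lim_from_bounds:
  fixes X :: "nat \<Rightarrow> real"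
  assumes "\<And>\<delta>. \<delta> > 0 \<Longrightarrow> \<exists>N. \<forall>n\<ge>N. 0 \<le> X n \<and> X n \<le> \<delta>"
  shows "X \<longlonglongrightarrow> 0"
proof (rule LIMSEQ_I)
  fix r :: real assume r: "0 < r"
  obtain N where N: "\<forall>n\<ge>N. 0 \<le> X n \<and> X n \<le> r / 2" using assms[of "r/2"] r by auto
  show "\<exists>no. \<forall>n\<ge>no. norm (X n - 0) < r"
    using N r by (intro exI[of _ N]) auto
qed

lemma angle_conv:
  assumes h12: "\<And>\<delta>. \<delta> > 0 \<Longrightarrow> \<exists>N. \<forall>n\<ge>N. 0 \<le> hang g (q n) (A n) (B n) \<and> hang g (q n) (A n) (B n) \<le> \<delta>"
    and h21: "\<And>\<delta>. \<delta> > 0 \<Longrightarrow> \<exists>N. \<forall>n\<ge>N. 0 \<le> hang g (q n) (B n) (A n) \<and> hang g (q n) (B n) (A n) \<le> \<delta>"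
  shows "(\<lambda>n. subspace_angle g (q n) (A n) (B n)) \<longlonglongrightarrow> 0"
proof (rule lim_from_bounds)
  fix \<delta> :: real assume d: "\<delta> > 0"
  obtain N1 where N1: "\<forall>n\<ge>N1. 0 \<le> hang g (q n) (A n) (B n) \<and> hang g (q n) (A n) (B n) \<le> \<delta>"
    using h12[OF d] by blast
  obtain N2 where N2: "\<forall>n\<ge>N2. 0 \<le> hang g (q n) (B n) (A n) \<and> hang g (q n) (B n) (A n) \<le> \<delta>"
    using h21[OF d] by blast
  show "\<exists>N. \<forall>n\<ge>N. 0 \<le> subspace_angle g (q n) (A n) (B n) \<and> subspace_angle g (q n) (A n) (B n) \<le> \<delta>"
    using N1 N2 by (intro exI[of _ "max N1 N2"]) (auto simp: subspace_angle_hang)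
qed

theorem mainTheorem9:
  fixes M :: "'a::euclidean_space set" and f :: "'a \<Rightarrow> 'a" and f' :: "'a \<Rightarrow> 'a \<Rightarrow>\<^sub>L 'a"
    and g :: "'a \<Rightarrow> 'a \<Rightarrow> 'a \<Rightarrow> real" and \<nu> \<gamma>1 \<gamma>2 \<mu> C :: real and p :: 'a
  assumes "closed_C1_manifold M"
    and "partially_hyperbolic M f f' g \<nu> \<gamma>1 \<gamma>2 \<mu> C"
    and "p \<in> M"
  shows "(\<forall>E1 E2. center_direction M f f' g \<nu> \<gamma>1 \<gamma>2 \<mu> C p E1 \<and>
                   center_direction M f f' g \<nu> \<gamma>1 \<gamma>2 \<mu> C p E2 \<longrightarrow>
            (\<lambda>n. subspace_angle g ((f ^^ n) p) (Dfn f f' p n ` E1) (Dfn f f' p n ` E2))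
              \<longlonglongrightarrow> 0)
       \<and> (\<forall>E1 E2. unstable_direction M f f' g \<nu> \<gamma>1 \<gamma>2 \<mu> C p E1 \<and>
                   unstable_direction M f f' g \<nu> \<gamma>1 \<gamma>2 \<mu> C p E2 \<longrightarrow>
            (\<lambda>n. subspace_angle g ((f ^^ n) p) (Dfn f f' p n ` E1) (Dfn f f' p n ` E2))
              \<longlonglongrightarrow> 0)"
proof -
  have RM: "riemannian_metric M g"
    and rates: "0 < \<nu>" "\<nu> < \<gamma>1" "\<gamma>1 \<le> \<gamma>2" "\<gamma>2 < \<mu>" "\<nu> < 1" "1 < \<mu>" "C > 1"
    using assms(2) unfolding partially_hyperbolic_def by blast+
  have pM: "p \<in> M" by fact
  show ?thesis
  proof (intro conjI allI impI)
    fix E1 E2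
    assume "center_direction M f f' g \<nu> \<gamma>1 \<gamma>2 \<mu> C p E1 \<and> center_direction M f f' g \<nu> \<gamma>1 \<gamma>2 \<mu> C p E2"
    then obtain x1 Es1 Ec1 Eu1 x2 Es2 Ec2 Eu2 where
      S1: "spl M f f' g \<nu> \<gamma>1 \<gamma>2 \<mu> C p x1 Es1 Ec1 Eu1" and E1: "E1 = Ec1 0" and
      S2: "spl M f f' g \<nu> \<gamma>1 \<gamma>2 \<mu> C p x2 Es2 Ec2 Eu2" and E2: "E2 = Ec2 0"
      unfolding center_direction_def spl_def by blast
    show "(\<lambda>n. subspace_angle g ((f ^^ n) p) (Dfn f f' p n ` E1) (Dfn f f' p n ` E2)) \<longlonglongrightarrow> 0"
      unfolding E1 E2
      by (rule angle_conv[where q = "\<lambda>n. (f ^^ n) p"])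
        (rule center_half[OF S2 S1 RM rates pM], assumption,
         rule center_half[OF S1 S2 RM rates pM], assumption)
  next
    fix E1 E2
    assume "unstable_direction M f f' g \<nu> \<gamma>1 \<gamma>2 \<mu> C p E1 \<and> unstable_direction M f f' g \<nu> \<gamma>1 \<gamma>2 \<mu> C p E2"
    then obtain x1 Es1 Ec1 Eu1 x2 Es2 Ec2 Eu2 where
      S1: "spl M f f' g \<nu> \<gamma>1 \<gamma>2 \<mu> C p x1 Es1 Ec1 Eu1" and E1: "E1 = Eu1 0" and
      S2: "spl M f f' g \<nu> \<gamma>1 \<gamma>2 \<mu> C p x2 Es2 Ec2 Eu2" and E2: "E2 = Eu2 0"
      unfolding unstable_direction_def spl_def by blast
    show "(\<lambda>n. subspace_angle g ((f ^^ n) p) (Dfn f f' p n ` E1) (Dfn f f' p n ` E2)) \<longlonglongrightarrow> 0"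
      unfolding E1 E2
      by (rule angle_conv[where q = "\<lambda>n. (f ^^ n) p"])
        (rule unstable_half[OF S2 S1 RM rates pM], assumption,
         rule unstable_half[OF S1 S2 RM rates pM], assumption)
  qed
qed


end
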